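(* Let $k_1,\dots,k_d$ be distinct elements of $[n-1]$ and let $k=\min\{k_1,\dots,k_d\}$. If there is a chain $(w=v_1,v_2,\dots,v_{d+1}=w_0)$ compatible with $(k_1,\dots,k_d)$, then $w(i)=n+1-i$ for all $i\in[k-1]$.
   Context: Permutations in one-line notation; $w_0=[n,\dots,1]$; $wt_{i,j}$ is $w$ with positions $i<j$ swapped; $\ell$ the number of inversions. $u\lessdot w$ iff $w=ut_{i,j}$, $i<j$, $\ell(w)=\ell(u)+1$; $u\lessdot_k w$ iff moreover $i\le k<j$. A $k$-chain $v_1\lessdot_k\cdots\lessdot_k v_m$ ($m\ge1$) is increasing if the smaller of the two values exchanged at each step strictly increases along the chain. $(v_1,\dots,v_{d+1})$ is compatible with $(k_1,\dots,k_d)$ if for each $s$ there is an increasing $k_s$-chain from $v_s$ to $v_{s+1}$. *)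

theory Defs
  imports "HOL-Combinatorics.Combinatorics"
begin

text \<open>Permutations of [n] = {1..n} are functions nat => nat permuting {1..n}
 (one-line notation: w i is the value in position i).\<close>

definition longest :: "nat \<Rightarrow> nat \<Rightarrow> nat" where
  "longest n = (\<lambda>i. if 1 \<le> i \<and> i \<le> n then n + 1 - i else i)"

definition inv_num :: "nat \<Rightarrow> (nat \<Rightarrow> nat) \<Rightarrow> nat" where
  "inv_num n w = card {(i, j). 1 \<le> i \<and> i < j \<and> j \<le> n \<and> w i > w j}"

definition swap_pos :: "(nat \<Rightarrow> nat) \<Rightarrow> nat \<Rightarrow> nat \<Rightarrow> nat \<Rightarrow> nat" where
  "swap_pos w i j = w \<circ> Transposition.transpose i j"

definition kcover :: "nat \<Rightarrow> nat \<Rightarrow> (nat \<Rightarrow> nat) \<Rightarrow> (nat \<Rightarrow> nat) \<Rightarrow> nat \<Rightarrow> nat \<Rightarrow> bool" where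
  "kcover n k u w i j \<longleftrightarrow> u permutes {1..n} \<and> 1 \<le> i \<and> i < j \<and> j \<le> n \<and>
     w = swap_pos u i j \<and> inv_num n w = inv_num n u + 1 \<and> i \<le> k \<and> k < j"

definition inc_kchain :: "nat \<Rightarrow> nat \<Rightarrow> (nat \<Rightarrow> nat) list \<Rightarrow> bool" where
  "inc_kchain n k vs \<longleftrightarrow> vs \<noteq> [] \<and> (\<forall>v \<in> set vs. v permutes {1..n}) \<and>
     (\<exists>as :: nat list. length as = length vs - 1 \<and> sorted_wrt (<) as \<and>
       (\<forall>s < length vs - 1. \<exists>i j. kcover n k (vs ! s) (vs ! Suc s) i j \<and>
            as ! s = min ((vs ! s) i) ((vs ! s) j)))"

definition compatible :: "nat \<Rightarrow> (nat \<Rightarrow> nat) list \<Rightarrow> nat list \<Rightarrow> bool" where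
  "compatible n vs ks \<longleftrightarrow> length vs = length ks + 1 \<and>
     (\<forall>s < length ks. \<exists>c. inc_kchain n (ks ! s) c \<and> hd c = vs ! s \<and> last c = vs ! Suc s)"

end

theory Submission
  imports Defs
begin

definition Inv :: "nat \<Rightarrow> (nat \<Rightarrow> nat) \<Rightarrow> (nat \<times> nat) set" where
  "Inv n x = {(p,q). 1 \<le> p \<and> p < q \<and> q \<le> n \<and> x p > x q}"

lemma finite_Inv: "finite (Inv n x)"
proof -
  have "Inv n x \<subseteq> {1..n} \<times> {1..n}" by (auto simp: Inv_def)
  then show ?thesis by (rule finite_subset) auto
qed

definition Fset :: "nat \<Rightarrow> nat \<Rightarrow> (nat \<times> nat) set" where
  "Fset i j = {(p,q). (p = i \<and> i < q \<and> q \<le> j) \<or> (i \<le> p \<and> p < j \<and> q = j)}"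

lemma tr_cases: "Transposition.transpose i j p = (if p = i then j else if p = j then i else p)"
  by (simp add: Transposition.transpose_def)

lemma key_pair:
  assumes ij: "1 \<le> i" "i < j" "j \<le> n"
    and pq: "1 \<le> p" "p < q" "q \<le> n" and nF: "(p,q) \<notin> Fset i j"
  shows "1 \<le> Transposition.transpose i j p \<and> Transposition.transpose i j p < Transposition.transpose i j q
     \<and> Transposition.transpose i j q \<le> n
     \<and> (Transposition.transpose i j p, Transposition.transpose i j q) \<notin> Fset i j"
proof -
  have nF': "\<not> (p = i \<and> i < q \<and> q \<le> j)" "\<not> (i \<le> p \<and> p < j \<and> q = j)"
    using nF by (auto simp: Fset_def)
  show ?thesis
  proof (cases "p = i")
    case True
    then have "q > j" using nF' pq by auto
    then show ?thesis using True ij pq by (simp add: tr_cases Fset_def)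
  next
    case pi: False
    show ?thesis
    proof (cases "p = j")
      case True
      then have "q > j" using pq by auto
      then show ?thesis using True ij pq by (simp add: tr_cases Fset_def)
    next
      case pj: False
      show ?thesis
      proof (cases "q = i")
        case True
        then show ?thesis using pi pj ij pq by (simp add: tr_cases Fset_def)
      next
        case qi: False
        show ?thesis
        proof (cases "q = j")
          case True
          then have "p < i" using nF' pq pi by auto
          then show ?thesis using True ij pq by (simp add: tr_cases Fset_def)
        next
          case False
          then show ?thesis using pi pj qi ij pq nF by (simp add: tr_cases Fset_def)
        qed
      qed
    qed
  qed
qed

lemma key_map:
  assumes ij: "1 \<le> i" "i < j" "j \<le> n" and that: "pq \<in> Inv n x - Fset i j"
  shows "map_prod (Transposition.transpose i j) (Transposition.transpose i j) pq \<in> Inv n (x \<circ> Transposition.transpose i j) - Fset i j"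
  proof -
    let ?t = "Transposition.transpose i j"
    obtain p q where pq: "pq = (p,q)" by (cases pq)
    have a: "1 \<le> p" "p < q" "q \<le> n" "x p > x q" "(p,q) \<notin> Fset i j"
      using that pq by (auto simp: Inv_def)
    note k = key_pair[OF ij a(1-3) a(5)]
    have "x (?t (?t p)) > x (?t (?t q))" using a by simp
    then show ?thesis using k pq by (simp add: Inv_def)
  qed

lemma map_prod_tt: "map_prod (Transposition.transpose i j) (Transposition.transpose i j)
   (map_prod (Transposition.transpose i j) (Transposition.transpose i j) pq) = pq"
  by (cases pq) simp

lemma outside_F_bij:
  assumes ij: "1 \<le> i" "i < j" "j \<le> n"
  shows "bij_betw (map_prod (Transposition.transpose i j) (Transposition.transpose i j))
           (Inv n u - Fset i j) (Inv n (u \<circ> Transposition.transpose i j) - Fset i j)"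
proof (rule bij_betw_byWitness[where f' = "map_prod (Transposition.transpose i j) (Transposition.transpose i j)"])
  have uu: "(u \<circ> Transposition.transpose i j) \<circ> Transposition.transpose i j = u" by (simp add: comp_assoc)
  show "\<forall>a\<in>Inv n u - Fset i j. map_prod (Transposition.transpose i j) (Transposition.transpose i j) (map_prod (Transposition.transpose i j) (Transposition.transpose i j) a) = a" 
    by (simp add: map_prod_tt)
  show "\<forall>a\<in>Inv n (u \<circ> Transposition.transpose i j) - Fset i j. map_prod (Transposition.transpose i j) (Transposition.transpose i j) (map_prod (Transposition.transpose i j) (Transposition.transpose i j) a) = a"
    by (simp add: map_prod_tt)
  show "map_prod (Transposition.transpose i j) (Transposition.transpose i j) ` (Inv n u - Fset i j) \<subseteq> Inv n (u \<circ> Transposition.transpose i j) - Fset i j"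
    by (rule image_subsetI, rule key_map[OF ij])
  show "map_prod (Transposition.transpose i j) (Transposition.transpose i j) ` (Inv n (u \<circ> Transposition.transpose i j) - Fset i j) \<subseteq> Inv n u - Fset i j"
    apply (rule image_subsetI)
    using key_map[OF ij, of _ "u \<circ> Transposition.transpose i j"] uu by simp
qed

lemma card_split: "finite A \<Longrightarrow> card A = card (A - F) + card (A \<inter> F)"
  by (metis Diff_Diff_Int Int_commute card_Diff_subset_Int card_mono inf_le1 finite_Int le_add_diff_inverse2 Diff_Int card_Diff_subset Int_lower1)

lemma inv_balance:
  assumes ij: "1 \<le> i" "i < j" "j \<le> n"
  shows "card (Inv n (u \<circ> Transposition.transpose i j)) + card (Inv n u \<inter> Fset i j)
       = card (Inv n u) + card (Inv n (u \<circ> Transposition.transpose i j) \<inter> Fset i j)"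
proof -
  have "card (Inv n u - Fset i j) = card (Inv n (u \<circ> Transposition.transpose i j) - Fset i j)"
    using bij_betw_same_card[OF outside_F_bij[OF ij]] .
  then show ?thesis using card_split[OF finite_Inv, of n u "Fset i j"]
      card_split[OF finite_Inv, of n "u \<circ> Transposition.transpose i j" "Fset i j"] by linarith
qed

lemma cover_lt:
  assumes inj: "inj_on u {1..n}" and ij: "1 \<le> i" "i < j" "j \<le> n"
    and c: "card (Inv n (u \<circ> Transposition.transpose i j)) = card (Inv n u) + 1"
  shows "u i < u j"
proof (rule ccontr)
  assume "\<not> u i < u j"
  moreover have "u i \<noteq> u j" using inj ij by (auto dest: inj_onD)
  ultimately have gt: "u i > u j" by simp
  let ?w = "u \<circ> Transposition.transpose i j"
  have sub: "Inv n ?w \<inter> Fset i j \<subseteq> (Inv n u \<inter> Fset i j) - {(i,j)}"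
  proof
    fix pq assume pq: "pq \<in> Inv n ?w \<inter> Fset i j"
    obtain p q where e: "pq = (p,q)" by (cases pq)
    have a: "1 \<le> p" "p < q" "q \<le> n" "?w p > ?w q" "(p = i \<and> i < q \<and> q \<le> j) \<or> (i \<le> p \<and> p < j \<and> q = j)"
      using pq e by (auto simp: Inv_def Fset_def)
    show "pq \<in> (Inv n u \<inter> Fset i j) - {(i,j)}"
    proof (cases "p = i")
      case True
      show ?thesis
      proof (cases "q = j")
        case True
        then show ?thesis using a \<open>p = i\<close> gt by (simp add: tr_cases)
      next
        case False
        then have "q < j" using a True by auto
        then have "u j > u q" using a True ij by (simp add: tr_cases)
        then show ?thesis using a True e gt \<open>q < j\<close> by (auto simp: Inv_def Fset_def)
      qed
    next
      case False
      then have "i < p" "p < j" "q = j" using a by auto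
      then have "u p > u i" using a by (simp add: tr_cases)
      then show ?thesis using a e gt \<open>i < p\<close> \<open>p < j\<close> \<open>q = j\<close> by (auto simp: Inv_def Fset_def)
    qed
  qed
  have ij_in: "(i,j) \<in> Inv n u \<inter> Fset i j" using ij gt by (simp add: Inv_def Fset_def)
  have "card (Inv n ?w \<inter> Fset i j) \<le> card ((Inv n u \<inter> Fset i j) - {(i,j)})"
    using sub by (intro card_mono) (auto intro: finite_Inv)
  also have "\<dots> < card (Inv n u \<inter> Fset i j)"
    using ij_in by (intro card_Diff1_less) (auto intro: finite_Inv)
  finally show False using inv_balance[OF ij, of u] c by linarith
qed

lemma cover_between:
  assumes inj: "inj_on u {1..n}" and ij: "1 \<le> i" "i < j" "j \<le> n"
    and c: "card (Inv n (u \<circ> Transposition.transpose i j)) = card (Inv n u) + 1"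
    and q0: "i < q0" "q0 < j"
  shows "\<not> (u i < u q0 \<and> u q0 < u j)"
proof
  assume b: "u i < u q0 \<and> u q0 < u j"
  let ?w = "u \<circ> Transposition.transpose i j"
  let ?T = "{(i,j),(i,q0),(q0,j)}"
  have sub: "(Inv n u \<inter> Fset i j) \<union> ?T \<subseteq> Inv n ?w \<inter> Fset i j"
  proof
    fix pq assume pq: "pq \<in> (Inv n u \<inter> Fset i j) \<union> ?T"
    show "pq \<in> Inv n ?w \<inter> Fset i j"
    proof (cases "pq \<in> ?T")
      case True
      then show ?thesis using b ij q0 by (auto simp: Inv_def Fset_def tr_cases)
    next
      case False
      obtain p q where e: "pq = (p,q)" by (cases pq)
      have a: "1 \<le> p" "p < q" "q \<le> n" "u p > u q" "(p = i \<and> i < q \<and> q \<le> j) \<or> (i \<le> p \<and> p < j \<and> q = j)"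
        using pq e False by (auto simp: Inv_def Fset_def)
      show ?thesis
      proof (cases "p = i")
        case True
        have "q \<noteq> j"
        proof
          assume "q = j" then show False using a True b by simp
        qed
        then have "q < j" using a True by auto
        then show ?thesis using a True e b ij by (auto simp: Inv_def Fset_def tr_cases)
      next
        case False
        then have "i < p" "p < j" "q = j" using a by auto
        then show ?thesis using a e b ij by (auto simp: Inv_def Fset_def tr_cases)
      qed
    qed
  qed
  have disj: "(Inv n u \<inter> Fset i j) \<inter> ?T = {}" using b by (auto simp: Inv_def)
  have T3: "card ?T = 3" using q0 by auto
  have "card (Inv n u \<inter> Fset i j) + 3 = card ((Inv n u \<inter> Fset i j) \<union> ?T)"
    using disj T3 by (subst card_Un_disjoint) (auto intro: finite_Inv)
  also have "\<dots> \<le> card (Inv n ?w \<inter> Fset i j)"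
    using sub by (intro card_mono) (auto intro: finite_Inv)
  finally show False using inv_balance[OF ij, of u] c by linarith
qed

lemma kcover_props:
  assumes "kcover n k u w i j"
  shows "u permutes {1..n}" "1 \<le> i" "i < j" "j \<le> n" "i \<le> k" "k < j"
    "w = u \<circ> Transposition.transpose i j" "u i < u j"
    "\<And>q. i < q \<Longrightarrow> q < j \<Longrightarrow> \<not> (u i < u q \<and> u q < u j)"
proof -
  have a: "u permutes {1..n}" "1 \<le> i" "i < j" "j \<le> n" "i \<le> k" "k < j"
    "w = u \<circ> Transposition.transpose i j" "inv_num n w = inv_num n u + 1"
    using assms by (auto simp: kcover_def swap_pos_def)
  have inj: "inj_on u {1..n}" using a(1) by (meson permutes_inj_on)
  have c: "card (Inv n (u \<circ> Transposition.transpose i j)) = card (Inv n u) + 1"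
    using a(7,8) by (simp add: inv_num_def Inv_def)
  show "u permutes {1..n}" "1 \<le> i" "i < j" "j \<le> n" "i \<le> k" "k < j"
    "w = u \<circ> Transposition.transpose i j" using a by auto
  show "u i < u j" using cover_lt[OF inj a(2-4) c] .
  show "\<And>q. i < q \<Longrightarrow> q < j \<Longrightarrow> \<not> (u i < u q \<and> u q < u j)"
    using cover_between[OF inj a(2-4) c] by blast
qed

definition rlmax :: "nat \<Rightarrow> (nat \<Rightarrow> nat) \<Rightarrow> nat \<Rightarrow> bool" where
  "rlmax n v c \<longleftrightarrow> (\<forall>q. c < q \<and> q \<le> n \<longrightarrow> v q < v c)"

lemma rlmax_step:
  assumes inj: "inj_on x {1..n}" and ij: "1 \<le> i" "i < j" "j \<le> n"
    and lt: "x i < x j" and btw: "\<And>q. i < q \<Longrightarrow> q < j \<Longrightarrow> \<not> (x i < x q \<and> x q < x j)"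
    and ci: "c \<noteq> i" and r: "rlmax n (x \<circ> Transposition.transpose i j) c"
  shows "rlmax n x c"
  unfolding rlmax_def
proof (intro allI impI)
  fix q assume q: "c < q \<and> q \<le> n"
  let ?y = "x \<circ> Transposition.transpose i j"
  have ry: "\<And>q. c < q \<Longrightarrow> q \<le> n \<Longrightarrow> ?y q < ?y c" using r by (auto simp: rlmax_def)
  show "x q < x c"
  proof (cases "c = j")
    case True
    then have "q \<noteq> i" "q \<noteq> j" using q ij by auto
    then have "x q < x i" using ry[of q] q True by (simp add: tr_cases)
    then show ?thesis using lt True by simp
  next
    case cj: False
    have yc: "?y c = x c" using ci cj by (simp add: tr_cases)
    show ?thesis
    proof (cases "q = i")
      case True
      then have "?y j < ?y c" using ry[of j] q ij by simp
      then show ?thesis using True yc ij by (simp add: tr_cases)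
    next
      case qi: False
      show ?thesis
      proof (cases "q = j")
        case True
        show ?thesis
        proof (cases "i < c")
          case True
          have "?y j < ?y c" using ry[of j] q \<open>q = j\<close> by simp
          then have "x i < x c" using yc ij by (simp add: tr_cases)
          moreover have "c < j" using q \<open>q = j\<close> by simp
          moreover have "x c \<noteq> x j" using inj cj ij True \<open>c < j\<close> by (auto dest: inj_onD)
          ultimately show ?thesis using btw[of c] True \<open>q = j\<close> by auto
        next
          case False
          then have "c < i" using ci by simp
          then have "?y i < ?y c" using ry[of i] ij by simp
          then show ?thesis using yc \<open>q = j\<close> ij by (simp add: tr_cases)
        qed
      next
        case False
        then have "?y q = x q" using qi by (simp add: tr_cases)
        then show ?thesis using ry[of q] q yc by simp
      qed
    qed
  qed
qed

lemma chain_lemma: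
  assumes ch: "inc_kchain n k vs" and rk: "rlmax n (last vs) k" and rc: "rlmax n (last vs) c"
    and ck: "c \<noteq> k"
  shows "rlmax n (hd vs) c"
proof -
  define m where "m = length vs - 1"
  define V where "V s = vs ! s" for s
  have ne: "vs \<noteq> []" using ch by (simp add: inc_kchain_def)
  have perm: "V s permutes {1..n}" if sm: "s \<le> m" for s
  proof -
    have "s < length vs" using sm ne m_def by (cases vs) auto
    then have "vs ! s \<in> set vs" by (rule nth_mem)
    then show ?thesis using ch unfolding inc_kchain_def V_def by blast
  qed
  obtain as where as: "length as = m" "sorted_wrt (<) as"
    "\<forall>s<m. \<exists>i j. kcover n k (V s) (V (Suc s)) i j \<and> as ! s = min (V s i) (V s j)"
    using ch unfolding inc_kchain_def V_def m_def by blast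
  have ex: "\<forall>s\<in>{..<m}. \<exists>ij. kcover n k (V s) (V (Suc s)) (fst ij) (snd ij) \<and> as ! s = min (V s (fst ij)) (V s (snd ij))"
    using as(3) by auto
  obtain f where f: "\<forall>s\<in>{..<m}. kcover n k (V s) (V (Suc s)) (fst (f s)) (snd (f s)) \<and> as ! s = min (V s (fst (f s))) (V s (snd (f s)))"
    using bchoice[OF ex] by blast
  define I where "I s = fst (f s)" for s
  define J where "J s = snd (f s)" for s
  have kc: "\<And>s. s < m \<Longrightarrow> kcover n k (V s) (V (Suc s)) (I s) (J s)"
    and asI: "\<And>s. s < m \<Longrightarrow> as ! s = V s (I s)"
  proof -
    fix s assume s: "s < m"
    then show kc: "kcover n k (V s) (V (Suc s)) (I s) (J s)" using f I_def J_def by auto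
    have "V s (I s) < V s (J s)" using kcover_props(8)[OF kc] .
    then show "as ! s = V s (I s)" using f s I_def J_def by auto
  qed
  have hdV: "hd vs = V 0" using ne by (simp add: V_def hd_conv_nth)
  have lastV: "last vs = V m" using ne by (simp add: V_def m_def last_conv_nth)
  have bk: "s \<le> m \<Longrightarrow> (\<forall>r. s \<le> r \<and> r < m \<longrightarrow> I r \<noteq> c) \<Longrightarrow> rlmax n (V s) c" for s
  proof (induction "m - s" arbitrary: s)
    case 0
    then have "s = m" by simp
    then show ?case using rc lastV by simp
  next
    case (Suc d)
    then have sm: "s < m" by simp
    have IH: "rlmax n (V (Suc s)) c" using Suc by simp
    note p = kcover_props[OF kc[OF sm]]
    have inj: "inj_on (V s) {1..n}" using perm[of s] sm by (meson permutes_inj_on less_imp_le)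
    show ?case
      using rlmax_step[OF inj p(2,3,4,8) p(9)] Suc.prems(2) sm IH p(7) by auto
  qed
  show ?thesis
  proof (cases "\<exists>r<m. I r = c")
    case False
    then show ?thesis using bk[of 0] hdV by auto
  next
    case True
    define T where "T = {r. r < m \<and> I r = c}"
    have finT: "finite T" by (simp add: T_def)
    have neT: "T \<noteq> {}" using True T_def by auto
    define t where "t = Max T"
    have tT: "t \<in> T" using finT neT t_def by simp
    have tm: "t < m" "I t = c" using tT T_def by auto
    have after: "\<forall>r. Suc t \<le> r \<and> r < m \<longrightarrow> I r \<noteq> c"
    proof (intro allI impI)
      fix r assume "Suc t \<le> r \<and> r < m"
      then show "I r \<noteq> c" using Max_ge[OF finT, of r] t_def T_def by fastforce
    qed
    have rS: "rlmax n (V (Suc t)) c" using bk[of "Suc t"] tm after by simp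
    note p = kcover_props[OF kc[OF tm(1)]]
    define a where "a = V t c"
    define b where "b = V t (J t)"
    have ck': "c < k" using p(5) tm ck by simp
    have kJ: "k \<noteq> J t" using p(6) by simp
    have ab: "a < b" using p(8) tm a_def b_def by simp
    have btw: "\<not> (a < V t k \<and> V t k < b)" using p(9)[of k] ck' p(6) tm a_def b_def by simp
    have VS: "\<And>x. V (Suc t) x = V t (Transposition.transpose c (J t) x)" using p(7) tm by simp
    have "V (Suc t) k < V (Suc t) c" using rS p(6) p(4) ck' unfolding rlmax_def by auto
    then have "V t k < b" using VS ck kJ b_def by (simp add: tr_cases)
    moreover have "V t k \<noteq> a"
    proof -
      have inj: "inj_on (V t) {1..n}" using perm[of t] tm by (meson permutes_inj_on less_imp_le)
      show ?thesis using inj_onD[OF inj, of k c] ck p(2) tm ck' p(4) p(6) a_def by auto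
    qed
    ultimately have ka: "V t k < a" using btw by auto
    define P where "P s \<longleftrightarrow> V s k < a \<and> (\<exists>q. k < q \<and> q \<le> n \<and> V s q = a)" for s
    have "P m"
    proof (rule dec_induct[where P = P])
      show "Suc t \<le> m" using tm by simp
      have "V (Suc t) k < a" using ka VS ck kJ by (simp add: tr_cases)
      moreover have "V (Suc t) (J t) = a" using VS a_def by simp
      ultimately show "P (Suc t)" using p(4,6) unfolding P_def by blast
    next
      fix s assume st: "Suc t \<le> s" and sm: "s < m" and Ps: "P s"
      note ps = kcover_props[OF kc[OF sm]]
      have ts: "t < s" using st by simp
      have gt: "as ! t < as ! s" using sorted_wrt_nth_less[OF as(2) ts] sm as(1) by simp
      then have agt: "a < V s (I s)" using asI[OF sm] asI[OF tm(1)] tm a_def by simp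
      have VSs: "\<And>x. V (Suc s) x = V s (Transposition.transpose (I s) (J s) x)" using ps(7) by simp
      have ks: "V s k < a" using Ps unfolding P_def by simp
      obtain q where q: "k < q" "q \<le> n" "V s q = a" using Ps unfolding P_def by blast
      have "I s \<noteq> k" using ks agt by auto
      then have "V (Suc s) k = V s k" using VSs ps(6) by (simp add: tr_cases)
      moreover have "q \<noteq> I s" using q ps(5) by simp
      moreover have "q \<noteq> J s" using q agt ps(8) by auto
      ultimately have "V (Suc s) k < a" "V (Suc s) q = a" using VSs q ks by (auto simp: tr_cases)
      then show "P (Suc s)" using q unfolding P_def by blast
    qed
    then obtain q where q: "k < q" "q \<le> n" "V m q = a" and "V m k < a" unfolding P_def by blast
    then show ?thesis using rk lastV unfolding rlmax_def by auto
  qed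
qed

lemma rlmax_longest: "1 \<le> c \<Longrightarrow> rlmax n (longest n) c"
  unfolding rlmax_def longest_def by auto

lemma prefix_values:
  assumes wp: "w permutes {1..n}" and r: "\<And>c. 1 \<le> c \<Longrightarrow> c < K \<Longrightarrow> rlmax n w c"
    and Kn: "K \<le> n"
  shows "1 \<le> i \<Longrightarrow> i < K \<Longrightarrow> w i = n + 1 - i"
proof (induction i rule: less_induct)
  case (less i)
  have inj: "inj w" using wp by (rule permutes_inj)
  have img: "w ` {1..n} = {1..n}" using wp by (rule permutes_image)
  have yin: "n + 1 - i \<in> {1..n}" using less.prems Kn by auto
  then obtain p where p: "p \<in> {1..n}" "w p = n + 1 - i" using img by (metis imageE)
  have wi: "w i \<in> {1..n}" using less.prems Kn img by auto
  show ?case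
  proof (cases "p < i")
    case True
    then have "w p = n + 1 - p" using less.IH[of p] p less.prems by auto
    then show ?thesis using p True less.prems Kn by auto
  next
    case False
    show ?thesis
    proof (cases "p = i")
      case True then show ?thesis using p by simp
    next
      case False
      then have "i < p" using \<open>\<not> p < i\<close> by simp
      then have "w p < w i" using r[of i] less.prems p unfolding rlmax_def by auto
      then have gt: "w i > n + 1 - i" using p by simp
      define p' where "p' = n + 1 - w i"
      have p': "1 \<le> p'" "p' < i" using gt wi p'_def by auto
      then have "w p' = n + 1 - p'" using less.IH[of p'] less.prems by auto
      then have "w p' = w i" using p'_def wi by auto
      then have "p' = i" using inj by (meson injD)
      then show ?thesis using p' by simp
    qed
  qed
qed

theorem lemma5p11:
  fixes n :: nat and ks :: "nat list" and w :: "nat \<Rightarrow> nat"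
  assumes "w permutes {1..n}"
    and "ks \<noteq> []" and "distinct ks" and "\<forall>k\<in>set ks. 1 \<le> k \<and> k \<le> n - 1"
    and "\<exists>vs. compatible n vs ks \<and> hd vs = w \<and> last vs = longest n"
  shows "\<forall>i\<in>{1..Min (set ks) - 1}. w i = n + 1 - i"
proof -
  obtain vs where vs: "compatible n vs ks" "hd vs = w" "last vs = longest n" using assms(5) by blast
  define L where "L = length ks"
  have len: "length vs = L + 1" using vs(1) L_def by (simp add: compatible_def)
  have chains: "\<And>s. s < L \<Longrightarrow> \<exists>c. inc_kchain n (ks ! s) c \<and> hd c = vs ! s \<and> last c = vs ! Suc s"
    using vs(1) L_def by (simp add: compatible_def)
  have inv: "s \<le> L \<Longrightarrow> (\<forall>c. 1 \<le> c \<and> c \<le> n - 1 \<and> c \<notin> set (drop s ks) \<longrightarrow> rlmax n (vs ! s) c)" for s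
  proof (induction "L - s" arbitrary: s)
    case 0
    then have "s = L" by simp
    then have "vs ! s = longest n" using vs(3) len by (metis add_diff_cancel_right' last_conv_nth list.size(3) zero_neq_one add_is_0)
    then show ?case using rlmax_longest by simp
  next
    case (Suc d)
    then have sL: "s < L" by simp
    have IH: "\<forall>c. 1 \<le> c \<and> c \<le> n - 1 \<and> c \<notin> set (drop (Suc s) ks) \<longrightarrow> rlmax n (vs ! Suc s) c"
      using Suc by simp
    have dr: "drop s ks = ks ! s # drop (Suc s) ks" using sL L_def by (simp add: Cons_nth_drop_Suc)
    have "distinct (drop s ks)" using assms(3) by simp
    then have knot: "ks ! s \<notin> set (drop (Suc s) ks)" using dr by simp
    have kin: "ks ! s \<in> set ks" using sL L_def by simp
    then have kr: "1 \<le> ks ! s \<and> ks ! s \<le> n - 1" using assms(4) by blast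
    obtain ch where ch: "inc_kchain n (ks ! s) ch" "hd ch = vs ! s" "last ch = vs ! Suc s"
      using chains[OF sL] by blast
    show ?case
    proof (intro allI impI)
      fix c assume c: "1 \<le> c \<and> c \<le> n - 1 \<and> c \<notin> set (drop s ks)"
      then have cn: "c \<noteq> ks ! s" "c \<notin> set (drop (Suc s) ks)" using dr by auto
      have "rlmax n (last ch) (ks ! s)" using IH kr knot ch(3) by simp
      moreover have "rlmax n (last ch) c" using IH c cn ch(3) by simp
      ultimately have "rlmax n (hd ch) c" using chain_lemma[OF ch(1)] cn(1) by blast
      then show "rlmax n (vs ! s) c" using ch(2) by simp
    qed
  qed
  have w0: "vs ! 0 = w" using vs(2) len by (metis hd_conv_nth list.size(3) add_is_0 zero_neq_one)
  define K where "K = Min (set ks)"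
  have Kin: "K \<in> set ks" using assms(2) K_def by simp
  have Kn: "K \<le> n - 1" using Kin assms(4) by blast
  have r: "rlmax n w c" if "1 \<le> c" "c < K" for c
  proof -
    have "c \<notin> set ks" using that K_def Min_le[OF finite_set, of c ks] by (meson leD)
    then show ?thesis using inv[of 0] that Kn w0 by simp
  qed
  show ?thesis
  proof
    fix i assume "i \<in> {1..Min (set ks) - 1}"
    then have "1 \<le> i" "i < K" using K_def Kin assms(4) by auto
    then show "w i = n + 1 - i" using prefix_values[OF assms(1) r] Kn by auto
  qed
qed

end
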